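(* Let $i\ge 3$ and $k\ge 3$ be integers. Then: (a) $n_1(F_i,F_{i+2},F_{i+k})=\tfrac12\bigl(3F_iF_{i+2}-F_i-F_{i+2}+1\bigr)$ whenever $k\ge i+2$; (b) for $k\in\{i,i+1\}$, $n_1(F_i,F_{i+2},F_{i+k})=\tfrac12\bigl(3F_iF_{i+2}-F_i-F_{i+2}+1\bigr)-(2F_i-F_k)F_{k-2}$; (c) if $r=\lfloor (F_i-1)/F_k\rfloor\ge 1$ (equivalently $k\le i-1$), then $$n_1(F_i,F_{i+2},F_{i+k})=\tfrac12\bigl((F_i+2F_k-1)F_{i+2}-F_i+1\bigr)-\Bigl(rF_i-\frac{(r-1)(r+2)}{2}F_k\Bigr)F_{k-2}.$$
   Context: Fibonacci numbers: $F_0=0$, $F_1=1$, $F_n=F_{n-1}+F_{n-2}$. For positive integers $a_1,\dots,a_l$ with $\gcd(a_1,\dots,a_l)=1$ and an integer $n$, let $d(n;a_1,\dots,a_l)$ be the number of tuples $(x_1,\dots,x_l)$ of nonnegative integers with $a_1x_1+\dots+a_lx_l=n$. For a nonnegative integer $p$, the $p$-Sylvester number $n_p(a_1,\dots,a_l)$ is the number of nonnegative integers $n$ with $d(n;a_1,\dots,a_l)\le p$. *)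

theory Defs
  imports Main "HOL-Number_Theory.Fib"
begin

definition num_reps :: "nat list \<Rightarrow> nat \<Rightarrow> nat" where
  "num_reps as n = card {xs :: nat list. length xs = length as \<and>
      (\<Sum>j<length as. as ! j * xs ! j) = n}"

definition sylvester_p :: "nat \<Rightarrow> nat list \<Rightarrow> nat" where
  "sylvester_p p as = card {n :: nat. num_reps as n \<le> p}"

end

theory Submission
  imports Defs "HOL-Number_Theory.Cong"
begin

lemma num_reps3:
  fixes a b c n :: nat
  shows "num_reps [a,b,c] n = card {(x,y,z). a*x+b*y+c*z = n}"
proof -
  have eq: "{xs :: nat list. length xs = length [a,b,c] \<and>
      (\<Sum>j<length [a,b,c]. [a,b,c] ! j * xs ! j) = n} = (\<lambda>(x,y,z). [x,y,z]) ` {(x,y,z). a*x+b*y+c*z = n}"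
  proof (intro set_eqI iffI)
    fix xs assume "xs \<in> {xs :: nat list. length xs = length [a,b,c] \<and>
      (\<Sum>j<length [a,b,c]. [a,b,c] ! j * xs ! j) = n}"
    then have l: "length xs = 3" and s: "(\<Sum>j<length [a,b,c]. [a,b,c] ! j * xs ! j) = n" by simp_all
    from l obtain x y z where xs: "xs = [x,y,z]"
      by (auto simp: numeral_3_eq_3 length_Suc_conv)
    from s have "a*x+b*y+c*z = n" by (simp add: xs numeral_3_eq_3 lessThan_Suc)
    then have "(x,y,z) \<in> {(x,y,z). a*x+b*y+c*z = n}" by simp
    then show "xs \<in> (\<lambda>(x,y,z). [x,y,z]) ` {(x,y,z). a*x+b*y+c*z = n}" unfolding xs
      by (rule image_eqI[rotated]) simp
  next
    fix xs assume "xs \<in> (\<lambda>(x,y,z). [x,y,z]) ` {(x,y,z). a*x+b*y+c*z = n}"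
    then obtain x y z where xs: "xs = [x,y,z]" and "a*x+b*y+c*z = n" by auto
    then show "xs \<in> {xs :: nat list. length xs = length [a,b,c] \<and>
      (\<Sum>j<length [a,b,c]. [a,b,c] ! j * xs ! j) = n}"
      by (simp add: numeral_3_eq_3 lessThan_Suc)
  qed
  have inj: "inj_on (\<lambda>(x,y,z). [x::nat,y,z]) {(x,y,z). a*x+b*y+c*z = n}"
    by (auto simp: inj_on_def)
  show ?thesis unfolding num_reps_def eq using card_image[OF inj] by simp
qed

lemma reps_le1:
  fixes a b c n :: nat
  assumes "a > 0" "b > 0" "c > 0"
  shows "num_reps [a,b,c] n \<le> 1 \<longleftrightarrow>
    (\<forall>x y z x' y' z'. a*x+b*y+c*z = n \<longrightarrow> a*x'+b*y'+c*z' = n \<longrightarrow> x=x' \<and> y=y' \<and> z=z')"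
proof -
  let ?T = "{(x,y,z). a*x+b*y+c*z = n}"
  have "?T \<subseteq> {..n} \<times> {..n} \<times> {..n}"
  proof
    fix t assume "t \<in> ?T"
    then obtain x y z where t: "t = (x,y,z)" "a*x+b*y+c*z = n" by auto
    have "x \<le> a*x" "y \<le> b*y" "z \<le> c*z" using assms by auto
    moreover have "a*x \<le> n" "b*y \<le> n" "c*z \<le> n" using t(2) by linarith+
    ultimately have "x \<le> n" "y \<le> n" "z \<le> n" by linarith+
    then show "t \<in> {..n} \<times> {..n} \<times> {..n}" using t(1) by simp
  qed
  then have fin: "finite ?T" by (rule finite_subset) simp
  have e: "card ?T \<le> 1 \<longleftrightarrow> (\<forall>t1\<in>?T. \<forall>t2\<in>?T. t1=t2)" using card_le_Suc0_iff_eq[OF fin] by simp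
  show ?thesis unfolding num_reps3 e
  proof (intro iffI allI impI)
    fix x y z x' y' z'
    assume A: "\<forall>t1\<in>?T. \<forall>t2\<in>?T. t1=t2" and B: "a*x+b*y+c*z = n" "a*x'+b*y'+c*z' = n"
    have "(x,y,z) \<in> ?T" "(x',y',z') \<in> ?T" using B by simp_all
    then have "(x,y,z) = (x',y',z')" using A by blast
    then show "x=x' \<and> y=y' \<and> z=z'" by simp
  next
    assume H: "\<forall>x y z x' y' z'. a*x+b*y+c*z = n \<longrightarrow> a*x'+b*y'+c*z' = n \<longrightarrow> x=x' \<and> y=y' \<and> z=z'"
    show "\<forall>t1\<in>?T. \<forall>t2\<in>?T. t1=t2"
    proof (intro ballI)
      fix t1 t2 assume "t1 \<in> ?T" "t2 \<in> ?T"
      then obtain x y z x' y' z' where T: "t1 = (x,y,z)" "t2 = (x',y',z')" "a*x+b*y+c*z = n" "a*x'+b*y'+c*z' = n" by blast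
      then show "t1 = t2" using H[rule_format, of x y z x' y' z'] by simp
    qed
  qed
qed


definition m1 :: "nat \<Rightarrow> nat \<Rightarrow> nat \<Rightarrow> nat \<Rightarrow> nat \<Rightarrow> int" where
  "m1 a b p q u = (if q \<le> u then - int p * (int (u div q) - 1) else int b - int p * int ((u + a) div q))"

context
  fixes a b c p q :: nat
  assumes cop: "coprime a b" and apos: "a > 0" and bpos: "b > 0" and qpos: "q > 0"
    and ceq: "int c = int q * int b - int p * int a" and key: "3*p*a \<le> q*b"
begin

lemma K1:
  assumes u: "u < a" and r: "int a * int x + int b * int y + int c * int z = int a * X + int b * int u"
  shows "\<exists>j::nat. int y + int q * int z = int u + int a * int j \<and> int x = X + int p * int z - int b * int j"
proof -
  have e: "int a * (int x - int p * int z - X) = int b * (int u - int y - int q * int z)"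
    using r unfolding ceq by (simp add: algebra_simps)
  have "int a dvd int b * (int u - int y - int q * int z)" unfolding e[symmetric] by simp
  moreover have "coprime (int a) (int b)" using cop by simp
  ultimately have "int a dvd (int u - int y - int q * int z)" using coprime_dvd_mult_right_iff by blast
  then obtain t where t: "int u - int y - int q * int z = int a * t" by (auto simp: dvd_def)
  have "t \<le> 0"
  proof (rule ccontr)
    assume "\<not> t \<le> 0"
    then have "int a * 1 \<le> int a * t" using apos by (intro mult_left_mono) auto
    moreover have "int q * int z \<ge> 0" by simp
    ultimately show False using t u by linarith
  qed
  have "int a * (int x - int p * int z - X) = int a * (int b * t)" using e t by (simp add: algebra_simps)
  then have x: "int x - int p * int z - X = int b * t" using apos by simp
  show ?thesis
    by (rule exI[of _ "nat (-t)"]) (use t x \<open>t \<le> 0\<close> in \<open>simp add: algebra_simps\<close>)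
qed

lemma V:
  assumes u: "u < a" and X: "X < m1 a b p q u"
    and v1: "int q * int z \<le> int u + int a * int j" and v2: "int b * int j - int p * int z \<le> X"
  shows "j = 0 \<and> z = (if q \<le> u then u div q else 0)"
proof (cases "q \<le> u")
  case True
  define s where "s = u div q"
  have s1: "s \<ge> 1" using True qpos by (simp add: s_def div_greater_zero_iff Suc_le_eq)
  have Xb: "X \<le> - int p * (int s - 1) - 1" using X True by (simp add: m1_def s_def)
  have "u = q * s + u mod q" by (simp add: s_def)
  moreover have "u mod q < q" using qpos by simp
  ultimately have n1: "u + 1 \<le> q * s + q" and n2: "q * s \<le> u" by linarith+
  have "int (u + 1) \<le> int (q * s + q)" using n1 by (simp only: of_nat_le_iff)
  then have us: "int u + 1 \<le> int q * int s + int q" by simp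
  have "int (q * s) \<le> int u" using n2 by (simp only: of_nat_le_iff)
  then have qs: "int q * int s \<le> int u" by simp
  have key': "3 * (int p * int a) \<le> int q * int b" using key by (metis mult.assoc of_nat_le_iff of_nat_mult of_nat_numeral)
  have pa0: "int p * int a \<ge> 0" by simp
  have j0: "j = 0"
  proof (rule ccontr)
    assume "j \<noteq> 0" then have j1: "int j \<ge> 1" by simp
    have h1: "int q * (int b * int j - int p * int z) \<le> int q * X" using v2 by (intro mult_left_mono) auto
    have h2: "int p * (int q * int z) \<le> int p * (int u + int a * int j)" using v1 by (intro mult_left_mono) auto
    have h4: "int q * X \<le> int q * (- int p * (int s - 1) - 1)" using Xb by (intro mult_left_mono) auto
    have h3: "int p * (int u + 1) \<le> int p * (int q * int s + int q)" using us by (intro mult_left_mono) auto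
    have h5: "1 * (int q * int b - int p * int a) \<le> int j * (int q * int b - int p * int a)"
      using j1 key' pa0 by (intro mult_right_mono) linarith+
    have h6: "int p * int q \<le> int p * int a" using True u by (intro mult_left_mono) auto
    have "int q * int b * int j - int q * int p * int z \<le> int q * X" using h1 by (simp add: algebra_simps)
    moreover have "int q * int p * int z \<le> int p * int u + int p * int a * int j" using h2 by (simp add: algebra_simps)
    moreover have "int q * X \<le> int p * int q - int q * int p * int s - int q" using h4 by (simp add: algebra_simps)
    moreover have "int p * int u + int p \<le> int q * int p * int s + int p * int q" using h3 by (simp add: algebra_simps)
    moreover have "int q * int b - int p * int a \<le> int q * int b * int j - int p * int a * int j" using h5 by (simp add: algebra_simps)
    ultimately show False using h6 key' qpos by linarith
  qed
  have "q * z \<le> u" using v1 j0 by (simp flip: of_nat_mult)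
  then have zs: "z \<le> s" unfolding s_def using div_le_mono[OF \<open>q * z \<le> u\<close>, of q] qpos by simp
  have "int p * (int s - 1) < int p * int z" using v2 j0 Xb by simp
  then have "int s - 1 < int z" by (rule mult_left_less_imp_less) simp
  then have "z = s" using zs by simp
  then show ?thesis using j0 True s_def by simp
next
  case False
  define s' where "s' = (u + a) div q"
  have Xb: "X \<le> int b - int p * int s' - 1" using X False by (simp add: m1_def s'_def)
  have key': "3 * (int p * int a) \<le> int q * int b" using key by (metis mult.assoc of_nat_le_iff of_nat_mult of_nat_numeral)
  have pa0: "int p * int a \<ge> 0" by simp
  have j0: "j = 0"
  proof (rule ccontr)
    assume jn: "j \<noteq> 0"
    show False
    proof (cases "j = 1")
      case True
      have "q * z \<le> u + a" using v1 True by (simp flip: of_nat_mult of_nat_add)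
      then have "z \<le> s'" unfolding s'_def using div_le_mono[OF \<open>q * z \<le> u + a\<close>, of q] qpos by simp
      then have "int p * int z \<le> int p * int s'" by (intro mult_left_mono) auto
      then show False using v2 Xb True by simp
    next
      case False
      then have j2: "int j \<ge> 2" using jn by simp
      have h1: "int q * (int b * int j - int p * int z) \<le> int q * X" using v2 by (intro mult_left_mono) auto
      have h2: "int p * (int q * int z) \<le> int p * (int u + int a * int j)" using v1 by (intro mult_left_mono) auto
      have "int p * int s' \<ge> 0" by simp
      then have "X \<le> int b - 1" using Xb by linarith
      then have h4: "int q * X \<le> int q * (int b - 1)" by (intro mult_left_mono) auto
      have h3: "int p * int u \<le> int p * int a" using u by (intro mult_left_mono) auto
      have h5: "(int j - 1) * (3 * (int p * int a)) \<le> (int j - 1) * (int q * int b)"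
        using j2 key' by (intro mult_left_mono) auto
      have h6: "0 \<le> (int p * int a) * (2 * int j - 4)" using j2 pa0 by simp
      have "int q * int b * int j - int q * int p * int z \<le> int q * X" using h1 by (simp add: algebra_simps)
      moreover have "int q * int p * int z \<le> int p * int u + int p * int a * int j" using h2 by (simp add: algebra_simps)
      moreover have "int q * X \<le> int q * int b - int q" using h4 by (simp add: algebra_simps)
      moreover have "3 * int p * int a * int j - 3 * int p * int a \<le> int q * int b * int j - int q * int b" using h5 by (simp add: algebra_simps)
      moreover have "0 \<le> 2 * int p * int a * int j - 4 * int p * int a" using h6 by (simp add: algebra_simps)
      ultimately show False using h3 qpos by linarith
    qed
  qed
  have "q * z \<le> u" using v1 j0 by (simp flip: of_nat_mult)
  then have "z = 0" using False by (cases z) auto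
  then show ?thesis using j0 False by simp
qed

lemma K2:
  assumes "q * z \<le> u + a * j" and "0 \<le> X + int p * int z - int b * int j"
  shows "int a * int (nat (X + int p * int z - int b * int j)) + int b * int (u + a * j - q * z) + int c * int z
         = int a * X + int b * int u"
proof -
  have h: "int (u + a * j - q * z) = int u + int a * int j - int q * int z" using assms(1) by (simp add: of_nat_diff)
  have h2: "int (nat (X + int p * int z - int b * int j)) = X + int p * int z - int b * int j" using assms(2) by simp
  show ?thesis unfolding h h2 ceq by (simp add: algebra_simps)
qed

lemma ps_le_b:
  assumes u: "u < a" and uq: "u < q"
  shows "p * ((u + a) div q) \<le> b"
proof (cases "(u + a) div q = 0")
  case True then show ?thesis by simp
next
  case False
  define s' where "s' = (u + a) div q"
  have "q * s' \<le> u + a" unfolding s'_def by (simp add: times_div_less_eq_dividend)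
  moreover have "q \<le> q * s'" using False s'_def by simp
  ultimately have q2a: "q \<le> 2 * a" using u by linarith
  have "p * (q * s') \<le> p * (u + a)" using \<open>q * s' \<le> u + a\<close> by (rule mult_left_mono) simp
  moreover have "p * u \<le> p * q" using uq by simp
  moreover have "p * q \<le> p * (2 * a)" using q2a by (rule mult_left_mono) simp
  moreover have "q * (p * s') = p * (q * s')" "p * (u + a) = p * u + p * a" "p * (2 * a) = 2 * (p * a)"
    "3 * (p * a) \<le> q * b" using key by (simp_all add: algebra_simps)
  ultimately have "q * (p * s') \<le> q * b" by linarith
  then show ?thesis using qpos s'_def by simp
qed

lemma E:
  assumes u: "u < a" and X: "m1 a b p q u \<le> X"
  shows "\<exists>x y z x' y' z'. int a * int x + int b * int y + int c * int z = int a * X + int b * int u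
     \<and> int a * int x' + int b * int y' + int c * int z' = int a * X + int b * int u \<and> (x,y,z) \<noteq> (x',y',z')"
proof (cases "q \<le> u")
  case True
  define s where "s = u div q"
  have s1: "s \<ge> 1" using True qpos by (simp add: s_def div_greater_zero_iff Suc_le_eq)
  have Xb: "- int p * (int s - 1) \<le> X" using X True by (simp add: m1_def s_def)
  have qs: "q * s \<le> u" by (simp add: s_def times_div_less_eq_dividend)
  have qs1: "q * (s - 1) \<le> u" using qs by (meson diff_le_self le_trans mult_le_mono2)
  have "s \<noteq> s - 1" using s1 by simp
  have X1: "0 \<le> X + int p * int s - int b * int 0" using Xb by (simp add: algebra_simps)
  have X2: "0 \<le> X + int p * int (s - 1) - int b * int 0" using Xb s1 by (simp add: algebra_simps of_nat_diff)
  show ?thesis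
    apply (rule exI[of _ "nat (X + int p * int s - int b * int 0)"], rule exI[of _ "u + a * 0 - q * s"], rule exI[of _ s])
    apply (rule exI[of _ "nat (X + int p * int (s - 1) - int b * int 0)"], rule exI[of _ "u + a * 0 - q * (s - 1)"], rule exI[of _ "s - 1"])
    using K2[of s u 0 X] K2[of "s - 1" u 0 X] qs qs1 X1 X2 s1 \<open>s \<noteq> s - 1\<close> by simp
next
  case False
  define s' where "s' = (u + a) div q"
  have Xb: "int b - int p * int s' \<le> X" using X False by (simp add: m1_def s'_def)
  have "p * s' \<le> b" unfolding s'_def using ps_le_b u False by simp
  then have "int p * int s' \<le> int b" by (simp flip: of_nat_mult)
  then have X1: "0 \<le> X + int p * int 0 - int b * int 0" using Xb by simp
  have X2: "0 \<le> X + int p * int s' - int b * int 1" using Xb by simp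
  have qs: "q * s' \<le> u + a * 1" by (simp add: s'_def times_div_less_eq_dividend)
  have qs0: "q * 0 \<le> u + a * 0" by simp
  have ne: "(nat (X + int p * int 0 - int b * int 0), u + a * 0 - q * 0, 0::nat) \<noteq> (nat (X + int p * int s' - int b * int 1), u + a * 1 - q * s', s')"
  proof
    assume "(nat (X + int p * int 0 - int b * int 0), u + a * 0 - q * 0, 0::nat) = (nat (X + int p * int s' - int b * int 1), u + a * 1 - q * s', s')"
    then have "s' = 0" "u = u + a - q * s'" by auto
    then show False using apos by simp
  qed
  show ?thesis
    apply (rule exI[of _ "nat (X + int p * int 0 - int b * int 0)"], rule exI[of _ "u + a * 0 - q * 0"], rule exI[of _ 0])
    apply (rule exI[of _ "nat (X + int p * int s' - int b * int 1)"], rule exI[of _ "u + a * 1 - q * s'"], rule exI[of _ "s'"])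
    using K2[OF qs0 X1] K2[OF qs X2] ne by simp
qed

lemma m1_ge:
  assumes u: "u < a"
  shows "- int (b * u div a) \<le> m1 a b p q u"
proof (cases "q \<le> u")
  case True
  define s where "s = u div q"
  have qs: "q * s \<le> u" by (simp add: s_def times_div_less_eq_dividend)
  have "q * (a * p * s) \<le> q * (b * u)"
  proof -
    have "q * (a * p * s) = (a * p) * (q * s)" by (simp add: algebra_simps)
    also have "\<dots> \<le> (a * p) * u" using qs by (rule mult_left_mono) simp
    also have "\<dots> \<le> (q * b) * u" using key by (intro mult_right_mono) (simp_all add: algebra_simps)
    finally show ?thesis by (simp add: algebra_simps)
  qed
  then have "a * (p * s) \<le> b * u" using qpos by (simp add: algebra_simps)
  then have "(a * (p * s)) div a \<le> (b * u) div a" by (rule div_le_mono)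
  then have "p * s \<le> b * u div a" using apos by simp
  then have "int p * int s \<le> int (b * u div a)" by (simp flip: of_nat_mult)
  moreover have "int p * int s \<ge> int p * (int s - 1)" by (simp add: algebra_simps)
  ultimately show ?thesis using True by (simp add: m1_def s_def)
next
  case False
  have "p * ((u + a) div q) \<le> b" using ps_le_b u False by simp
  then have "int p * int ((u + a) div q) \<le> int b" by (simp flip: of_nat_mult)
  then show ?thesis using False by (simp add: m1_def)
qed

lemma nonneg_iff:
  "0 \<le> int a * X + int b * int u \<longleftrightarrow> - int (b * u div a) \<le> X"
proof -
  define D where "D = b * u div a"
  define R where "R = b * u mod a"
  have "b * u = a * D + R" by (simp add: D_def R_def)
  then have e: "int b * int u = int a * int D + int R" by (metis of_nat_add of_nat_mult)
  have R: "int R < int a" using apos by (simp add: R_def)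
  show ?thesis unfolding D_def[symmetric]
  proof
    assume h: "0 \<le> int a * X + int b * int u"
    show "- int D \<le> X"
    proof (rule ccontr)
      assume "\<not> - int D \<le> X"
      then have "X + int D \<le> -1" by simp
      then have "int a * (X + int D) \<le> int a * (-1)" by (intro mult_left_mono) auto
      then show False using h e R by (simp add: algebra_simps)
    qed
  next
    assume "- int D \<le> X"
    then have "0 \<le> int a * (X + int D)" by simp
    then show "0 \<le> int a * X + int b * int u" using e by (simp add: algebra_simps)
  qed
qed

lemma cpos: "c > 0"
proof -
  have "3 * (int p * int a) \<le> int q * int b" using key by (metis mult.assoc of_nat_le_iff of_nat_mult of_nat_numeral)
  moreover have "int q * int b > 0" using qpos bpos by simp
  ultimately have "int c > 0" unfolding ceq by linarith
  then show ?thesis by simp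
qed

lemma key_equiv:
  assumes u: "u < a" and nn: "0 \<le> int a * X + int b * int u"
  shows "num_reps [a,b,c] (nat (int a * X + int b * int u)) \<le> 1 \<longleftrightarrow> X < m1 a b p q u"
proof -
  let ?n = "nat (int a * X + int b * int u)"
  have conv: "a*x+b*y+c*z = ?n \<longleftrightarrow> int a * int x + int b * int y + int c * int z = int a * X + int b * int u" for x y z
  proof -
    have "a*x+b*y+c*z = ?n \<longleftrightarrow> int (a*x+b*y+c*z) = int ?n" by (simp only: of_nat_eq_iff)
    also have "\<dots> \<longleftrightarrow> int a * int x + int b * int y + int c * int z = int a * X + int b * int u" using nn by simp
    finally show ?thesis .
  qed
  have cp: "c > 0" by (rule cpos)
  show ?thesis unfolding reps_le1[OF apos bpos cp] conv
  proof
    assume H: "\<forall>x y z x' y' z'. int a * int x + int b * int y + int c * int z = int a * X + int b * int u \<longrightarrow>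
       int a * int x' + int b * int y' + int c * int z' = int a * X + int b * int u \<longrightarrow> x = x' \<and> y = y' \<and> z = z'"
    show "X < m1 a b p q u"
    proof (rule ccontr)
      assume "\<not> X < m1 a b p q u"
      then have "m1 a b p q u \<le> X" by simp
      from E[OF u this] obtain x y z x' y' z' where
        "int a * int x + int b * int y + int c * int z = int a * X + int b * int u"
        "int a * int x' + int b * int y' + int c * int z' = int a * X + int b * int u" "(x,y,z) \<noteq> (x',y',z')"
        by blast
      then show False using H by blast
    qed
  next
    assume X: "X < m1 a b p q u"
    show "\<forall>x y z x' y' z'. int a * int x + int b * int y + int c * int z = int a * X + int b * int u \<longrightarrow>
       int a * int x' + int b * int y' + int c * int z' = int a * X + int b * int u \<longrightarrow> x = x' \<and> y = y' \<and> z = z'"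
    proof (intro allI impI)
      fix x y z x' y' z'
      assume r1: "int a * int x + int b * int y + int c * int z = int a * X + int b * int u"
         and r2: "int a * int x' + int b * int y' + int c * int z' = int a * X + int b * int u"
      from K1[OF u r1] obtain j where j: "int y + int q * int z = int u + int a * int j" "int x = X + int p * int z - int b * int j" by blast
      from K1[OF u r2] obtain j' where j': "int y' + int q * int z' = int u + int a * int j'" "int x' = X + int p * int z' - int b * int j'" by blast
      have v1: "int q * int z \<le> int u + int a * int j" using j(1) by linarith
      have v2: "int b * int j - int p * int z \<le> X" using j(2) by linarith
      have v1': "int q * int z' \<le> int u + int a * int j'" using j'(1) by linarith
      have v2': "int b * int j' - int p * int z' \<le> X" using j'(2) by linarith
      from V[OF u X v1 v2] V[OF u X v1' v2'] have "j = j'" "z = z'" by auto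
      then have "int y = int y'" "int x = int x'" using j j' by auto
      then show "x = x' \<and> y = y' \<and> z = z'" using \<open>z = z'\<close> by simp
    qed
  qed
qed

lemma count_int:
  "int (card {n. num_reps [a,b,c] n \<le> 1}) = (\<Sum>u<a. m1 a b p q u + int (b * u div a))"
proof -
  define f where "f = (\<lambda>(u::nat, X::int). nat (int a * X + int b * int u))"
  define S where "S = (SIGMA u:{..<a}. {- int (b * u div a)..<m1 a b p q u})"
  have memS: "(u, X) \<in> S \<longleftrightarrow> u < a \<and> 0 \<le> int a * X + int b * int u \<and> X < m1 a b p q u" for u X
    unfolding S_def using nonneg_iff by auto
  have inj: "inj_on f S"
  proof (rule inj_onI)
    fix v w assume v: "v \<in> S" and w: "w \<in> S" and e: "f v = f w"
    obtain u X where vv: "v = (u, X)" by (cases v)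
    obtain u' X' where ww: "w = (u', X')" by (cases w)
    have h: "u < a" "0 \<le> int a * X + int b * int u" "u' < a" "0 \<le> int a * X' + int b * int u'"
      using v w memS vv ww by auto
    have eq: "int a * X + int b * int u = int a * X' + int b * int u'" using e h unfolding f_def vv ww by simp
    then have "int a * (X - X') = int b * (int u' - int u)" by (simp add: algebra_simps)
    then have "int a dvd int b * (int u' - int u)" by (metis dvd_def)
    moreover have "coprime (int a) (int b)" using cop by simp
    ultimately have d: "int a dvd (int u' - int u)" using coprime_dvd_mult_right_iff by blast
    have "u = u'"
    proof (rule ccontr)
      assume "u \<noteq> u'"
      then have "int u' - int u \<noteq> 0" by simp
      moreover have "\<bar>int u' - int u\<bar> < int a" using h by auto
      moreover have "\<bar>int a\<bar> \<le> \<bar>int u' - int u\<bar>" using dvd_imp_le_int[of "int u' - int u" "int a"] d calculation(1) by blast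
      ultimately show False by simp
    qed
    then have "int a * X = int a * X'" using eq by simp
    then have "X = X'" using apos by simp
    then show "v = w" using vv ww \<open>u = u'\<close> by simp
  qed
  have img: "{n. num_reps [a,b,c] n \<le> 1} = f ` S"
  proof (intro set_eqI iffI)
    fix n assume n: "n \<in> {n. num_reps [a,b,c] n \<le> 1}"
    have "coprime b a" using cop by (simp add: coprime_commute)
    from cong_solve_coprime_nat[OF this] obtain w where w: "[b * w = Suc 0] (mod a)" by blast
    define u where "u = (w * n) mod a"
    have u: "u < a" using apos by (simp add: u_def)
    have "[b * u = b * (w * n)] (mod a)" unfolding u_def by (simp add: cong_def mod_mult_right_eq)
    moreover have "[b * (w * n) = Suc 0 * n] (mod a)" using w by (metis cong_scalar_right mult.assoc)
    ultimately have "[b * u = n] (mod a)" by (metis cong_trans mult_Suc mult_0 add_0_right)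
    then have "(b * u) mod a = n mod a" by (simp add: cong_def)
    then have "int (b * u) mod int a = int n mod int a" by (metis of_nat_mod)
    then have "int a dvd int (b * u) - int n" by (simp add: mod_eq_dvd_iff)
    then have "int a dvd int n - int (b * u)" by (metis dvd_minus_iff minus_diff_eq)
    then obtain X where X: "int n - int b * int u = int a * X" by (auto simp: dvd_def)
    have nX: "int n = int a * X + int b * int u" using X by simp
    have nn: "0 \<le> int a * X + int b * int u" using nX by simp
    have "n = nat (int a * X + int b * int u)" using nX by simp
    then have "X < m1 a b p q u" using key_equiv[OF u nn] n by simp
    then have "(u, X) \<in> S" using memS u nn by simp
    then show "n \<in> f ` S" unfolding f_def using \<open>n = nat (int a * X + int b * int u)\<close> by force
  next
    fix n assume "n \<in> f ` S"
    then obtain u X where "(u, X) \<in> S" and n: "n = nat (int a * X + int b * int u)" unfolding f_def by auto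
    then have "u < a" "0 \<le> int a * X + int b * int u" "X < m1 a b p q u" using memS by auto
    then show "n \<in> {n. num_reps [a,b,c] n \<le> 1}" using key_equiv n by simp
  qed
  have "card S = (\<Sum>u<a. card {- int (b * u div a)..<m1 a b p q u})" unfolding S_def by simp
  also have "\<dots> = (\<Sum>u<a. nat (m1 a b p q u + int (b * u div a)))" by simp
  finally have cS: "card S = (\<Sum>u<a. nat (m1 a b p q u + int (b * u div a)))" .
  have "int (card {n. num_reps [a,b,c] n \<le> 1}) = int (card S)" unfolding img card_image[OF inj] ..
  also have "\<dots> = (\<Sum>u<a. int (nat (m1 a b p q u + int (b * u div a))))" unfolding cS by simp
  also have "\<dots> = (\<Sum>u<a. m1 a b p q u + int (b * u div a))"
  proof (rule sum.cong)
    fix x assume "x \<in> {..<a}"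
    then have "- int (b * x div a) \<le> m1 a b p q x" using m1_ge by simp
    then show "int (nat (m1 a b p q x + int (b * x div a))) = m1 a b p q x + int (b * x div a)" by simp
  qed simp
  finally show ?thesis .
qed

end

lemma pair_floor:
  fixes a b u :: nat
  assumes cop: "coprime a b" and u: "0 < u" "u < a"
  shows "b * u div a + b * (a - u) div a = b - 1"
proof -
  define Q where "Q = b * u div a"
  define R where "R = b * u mod a"
  have apos: "a > 0" using u by simp
  have bu: "b * u = a * Q + R" by (simp add: Q_def R_def)
  have "R \<noteq> 0"
  proof
    assume "R = 0"
    then have "a dvd b * u" using bu by simp
    then have "a dvd u" using cop by (simp add: coprime_dvd_mult_right_iff)
    then show False using u by (auto dest: dvd_imp_le)
  qed
  have Ra: "R < a" using apos by (simp add: R_def)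
  have bpos: "b > 0"
  proof (rule ccontr)
    assume "\<not> b > 0" then have "b = 0" by simp
    then have "a = 1" using cop by simp
    then show False using u by simp
  qed
  have "b * u < b * a" using u bpos by simp
  moreover have "a * Q \<le> b * u" using bu by simp
  moreover have "b * a = a * b" by simp
  ultimately have "a * Q < a * b" by linarith
  then have Qb: "Q < b" by simp
  have e: "b * (a - u) = a * (b - Q - 1) + (a - R)"
  proof -
    have "b * (a - u) = a * b - b * u" by (simp add: diff_mult_distrib2 mult.commute)
    also have "\<dots> = a * b - (a * Q + R)" using bu by simp
    also have "\<dots> = a * (b - Q - 1) + (a - R)"
    proof -
      define d where "d = b - Q - 1"
      have b_eq: "b = d + Q + 1" using Qb by (simp add: d_def)
      have "a * b = a * d + a * Q + a" by (simp add: b_eq algebra_simps)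
      moreover have "b - Q - 1 = d" by (simp add: d_def)
      ultimately show ?thesis using Ra by simp
    qed
    finally show ?thesis .
  qed
  have "b * (a - u) div a = b - Q - 1"
    by (rule div_nat_eqI) (use e Ra \<open>R \<noteq> 0\<close> in auto)
  then show ?thesis using Qb by (simp add: Q_def)
qed

lemma sum_floor:
  fixes a b :: nat
  assumes cop: "coprime a b" and apos: "a > 0"
  shows "2 * (\<Sum>u<a. b * u div a) = (a - 1) * (b - 1)"
proof -
  define g where "g u = b * u div a" for u
  have r: "(\<Sum>u<a. g (a - u)) = (\<Sum>u<a. g u) + b"
  proof -
    have "(\<Sum>u<a. g (a - u)) = (\<Sum>i<a. g (Suc (a - Suc i)))"
      by (rule sum.cong) (auto simp: Suc_diff_Suc)
    also have "\<dots> = (\<Sum>i<a. g (Suc i))" by (rule sum.nat_diff_reindex)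
    also have "\<dots> = (\<Sum>u<a. g u) + b"
    proof -
      have "(\<Sum>u<Suc a. g u) = g 0 + (\<Sum>i<a. g (Suc i))" by (rule sum.lessThan_Suc_shift)
      moreover have "(\<Sum>u<Suc a. g u) = (\<Sum>u<a. g u) + g a" by simp
      moreover have "g 0 = 0" "g a = b" using apos by (simp_all add: g_def)
      ultimately show ?thesis by linarith
    qed
    finally show ?thesis .
  qed
  have "(\<Sum>u<a. g u + g (a - u)) = (\<Sum>u<Suc (a - 1). g u + g (a - u))" using apos by simp
  also have "\<dots> = (g 0 + g a) + (\<Sum>i<a - 1. g (Suc i) + g (a - Suc i))"
    using sum.lessThan_Suc_shift[of "\<lambda>u. g u + g (a - u)" "a-1"] by simp
  also have "\<dots> = b + (\<Sum>i<a - 1. b - 1)"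
  proof -
    have "(\<Sum>i<a - 1. g (Suc i) + g (a - Suc i)) = (\<Sum>i<a - 1. b - 1)"
    proof (rule sum.cong)
      fix i assume "i \<in> {..<a - 1}"
      then have "0 < Suc i" "Suc i < a" by auto
      from pair_floor[OF cop this] show "g (Suc i) + g (a - Suc i) = b - 1" by (simp only: g_def)
    qed simp
    moreover have "g 0 + g a = b" using apos by (simp add: g_def)
    ultimately show ?thesis by simp
  qed
  finally have "(\<Sum>u<a. g u) + (\<Sum>u<a. g u) + b = b + (a - 1) * (b - 1)"
    using r by (simp add: sum.distrib)
  then show ?thesis by (simp add: g_def)
qed

lemma sum_split_add: "(\<Sum>u<m+n. f u) = (\<Sum>u<m. f u) + (\<Sum>t<n. f (m+t))" for f :: "nat \<Rightarrow> 'a::comm_monoid_add"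
  by (induct n) (simp_all add: add.assoc)

lemma block:
  fixes q r e :: nat
  assumes "e \<le> q"
  shows "(\<Sum>t<e. (r * q + t) div q) = e * r"
proof -
  have "(\<Sum>t<e. (r * q + t) div q) = (\<Sum>t<e. r)"
    by (rule sum.cong) (use assms in \<open>auto simp: div_add1_eq\<close>)
  then show ?thesis by simp
qed

lemma T_formula0:
  fixes q r :: nat
  assumes "q > 0"
  shows "2 * (\<Sum>u<r*q. u div q) = q * r * (r - 1)"
proof (induct r)
  case 0 then show ?case by simp
next
  case (Suc r)
  have "(\<Sum>u<Suc r * q. u div q) = (\<Sum>u<r*q. u div q) + (\<Sum>t<q. (r*q + t) div q)"
    using sum_split_add[of "\<lambda>u. u div q" "r*q" q] by (simp add: add.commute)
  also have "(\<Sum>t<q. (r*q + t) div q) = q * r" by (rule block) simp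
  finally have "2 * (\<Sum>u<Suc r * q. u div q) = q * r * (r - 1) + 2 * q * r" using Suc by simp
  also have "\<dots> = q * Suc r * (Suc r - 1)" by (cases r) (simp_all add: algebra_simps)
  finally show ?case .
qed

lemma T_formula:
  fixes q r e :: nat
  assumes "q > 0" "e \<le> q"
  shows "2 * (\<Sum>u<r*q+e. u div q) = q * r * (r - 1) + 2 * r * e"
proof -
  have "(\<Sum>u<r*q+e. u div q) = (\<Sum>u<r*q. u div q) + (\<Sum>t<e. (r*q + t) div q)"
    by (rule sum_split_add)
  also have "(\<Sum>t<e. (r*q + t) div q) = e * r" by (rule block) (use assms in simp)
  finally show ?thesis using T_formula0[OF assms(1), of r] by (simp add: algebra_simps)
qed

lemma hermite:
  fixes a q :: nat
  assumes q: "q > 0"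
  shows "(\<Sum>t<q. (a + t) div q) = a"
proof -
  define r where "r = a div q"
  define e where "e = a mod q"
  have a: "a = r * q + e" by (simp add: r_def e_def)
  have e: "e \<le> q" using q by (simp add: e_def less_imp_le)
  have "(\<Sum>u<a+q. u div q) = (\<Sum>u<a. u div q) + (\<Sum>t<q. (a + t) div q)" by (rule sum_split_add)
  moreover have "2 * (\<Sum>u<a+q. u div q) = q * Suc r * r + 2 * Suc r * e"
    using T_formula[OF q e, of "Suc r"] a by (simp add: algebra_simps)
  moreover have "2 * (\<Sum>u<a. u div q) = q * r * (r - 1) + 2 * r * e"
    using T_formula[OF q e, of r] a by simp
  ultimately have "2 * (\<Sum>t<q. (a + t) div q) + q * r * (r - 1) + 2 * r * e = q * Suc r * r + 2 * Suc r * e"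
    by linarith
  moreover have "q * Suc r * r = q * r * (r - 1) + 2 * (q * r)" by (cases r) (simp_all add: algebra_simps)
  ultimately have "2 * (\<Sum>t<q. (a + t) div q) = 2 * (q * r) + 2 * e" by (simp add: algebra_simps)
  then show ?thesis using a by (simp add: algebra_simps)
qed

lemma sumA:
  fixes a b p q :: nat
  assumes aq: "a \<le> q" and apos: "a > 0"
  shows "(\<Sum>u<a. m1 a b p q u) = int a * int b - int p * int (2 * a - q)"
proof -
  have "(\<Sum>u<a. m1 a b p q u) = (\<Sum>u<a. int b - int p * int ((u + a) div q))"
    by (rule sum.cong) (use aq in \<open>auto simp: m1_def\<close>)
  also have "\<dots> = int a * int b - int p * int (\<Sum>u<a. (u + a) div q)"
    by (simp add: sum_subtractf sum_distrib_left)
  also have "(\<Sum>u<a. (u + a) div q) = 2 * a - q"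
  proof (cases "2 * a \<le> q")
    case True
    have "(\<Sum>u<a. (u + a) div q) = (\<Sum>u<a. 0)" by (rule sum.cong) (use True in auto)
    then show ?thesis using True by simp
  next
    case False
    define k where "k = q - a"
    have ka: "k + (a - k) = a" using False aq by (simp add: k_def)
    have "(\<Sum>u<a. (u + a) div q) = (\<Sum>u<k + (a - k). (u + a) div q)" using ka by simp
    also have "\<dots> = (\<Sum>u<k. (u + a) div q) + (\<Sum>t<a - k. (k + t + a) div q)" by (rule sum_split_add)
    also have "(\<Sum>u<k. (u + a) div q) = (\<Sum>u<k. 0)" by (rule sum.cong) (auto simp: k_def)
    also have "(\<Sum>t<a - k. (k + t + a) div q) = (\<Sum>t<a - k. 1)"
    proof (rule sum.cong)
      fix t assume "t \<in> {..<a - k}"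
      then have "q \<le> k + t + a" "k + t + a < 2 * q" using False aq by (auto simp: k_def)
      then show "(k + t + a) div q = 1" by (intro div_nat_eqI) auto
    qed simp
    finally show ?thesis using False aq by (simp add: k_def)
  qed
  finally show ?thesis .
qed

lemma sumC:
  fixes a b p q :: nat
  assumes q: "q > 0" and qa: "q < a"
  shows "(\<Sum>u<a. m1 a b p q u) = int q * int b - int p * int a - int p * int (\<Sum>t<a-q. t div q)"
proof -
  have "(\<Sum>u<a. m1 a b p q u) = (\<Sum>u<q + (a - q). m1 a b p q u)" using qa by simp
  also have "\<dots> = (\<Sum>u<q. m1 a b p q u) + (\<Sum>t<a - q. m1 a b p q (q + t))" by (rule sum_split_add)
  also have "(\<Sum>u<q. m1 a b p q u) = (\<Sum>u<q. int b - int p * int ((a + u) div q))"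
    by (rule sum.cong) (auto simp: m1_def add.commute)
  also have "\<dots> = int q * int b - int p * int (\<Sum>u<q. (a + u) div q)"
    by (simp add: sum_subtractf sum_distrib_left)
  also have "(\<Sum>u<q. (a + u) div q) = a" by (rule hermite[OF q])
  also have "(\<Sum>t<a - q. m1 a b p q (q + t)) = (\<Sum>t<a - q. - int p * int (t div q))"
  proof (rule sum.cong)
    fix t
    have "(q + t) div q = Suc (t div q)" using q by (simp add: div_add_self1)
    then show "m1 a b p q (q + t) = - int p * int (t div q)" by (simp add: m1_def)
  qed simp
  also have "\<dots> = - int p * int (\<Sum>t<a - q. t div q)" by (simp add: sum_distrib_left)
  finally show ?thesis by simp
qed


lemma fib_ident: "fib (i + (m + 2)) + fib m * fib i = fib (m + 2) * fib (i + 2)"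
proof (induct m rule: fib.induct)
  case 1 then show ?case by simp
next
  case 2
  have "fib (i + 3) = fib (i + 2) + fib (i + 1)" by (simp add: numeral_3_eq_3 numeral_2_eq_2)
  moreover have "fib (i + 2) = fib (i + 1) + fib i" by (simp add: numeral_2_eq_2)
  moreover have "fib 3 = 2" by (simp add: numeral_3_eq_3)
  ultimately show ?case by (simp add: numeral_3_eq_3 numeral_2_eq_2)
next
  case (3 n)
  have e1: "fib (i + (Suc (Suc n) + 2)) = fib (i + (Suc n + 2)) + fib (i + (n + 2))"
    by (simp add: numeral_2_eq_2)
  have e2: "fib (Suc (Suc n)) = fib (Suc n) + fib n" by simp
  have e3: "fib (Suc (Suc n) + 2) = fib (Suc n + 2) + fib (n + 2)" by (simp add: numeral_2_eq_2)
  show ?case unfolding e1 e2 e3 using 3 by (simp add: algebra_simps)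
qed

lemma fib_ident_int:
  assumes "k \<ge> 2"
  shows "int (fib (i + k)) = int (fib k) * int (fib (i + 2)) - int (fib (k - 2)) * int (fib i)"
proof -
  define m where "m = k - 2"
  have k: "k = m + 2" using assms by (simp add: m_def)
  have "fib (i + k) + fib (k - 2) * fib i = fib k * fib (i + 2)"
    unfolding k add_diff_cancel_right' by (rule fib_ident)
  then have "int (fib (i + k)) + int (fib (k - 2)) * int (fib i) = int (fib k) * int (fib (i + 2))"
    by (metis of_nat_add of_nat_mult)
  then show ?thesis by linarith
qed

lemma fib_coprime: "coprime (fib i) (fib (i + 2))"
proof -
  have "gcd (fib i) (fib (2 + i)) = gcd (fib i) (fib 2)" by (rule gcd_fib_add)
  then have "gcd (fib i) (fib (i + 2)) = 1" by (simp add: add.commute)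
  then show ?thesis by (simp add: coprime_iff_gcd_eq_1)
qed

lemma fib_double: "2 * fib n \<le> fib (n + 2)"
proof -
  have "fib (n + 2) = fib (n + 1) + fib n" by (simp add: numeral_2_eq_2)
  moreover have "fib n \<le> fib (n + 1)" by (rule fib_mono) simp
  ultimately show ?thesis by simp
qed

lemma fib_key:
  assumes "k \<ge> 2"
  shows "3 * fib (k - 2) * fib i \<le> fib k * fib (i + 2)"
proof -
  define m where "m = k - 2"
  have k: "k = m + 2" using assms by (simp add: m_def)
  have "2 * fib (k - 2) \<le> fib k" unfolding k add_diff_cancel_right' by (rule fib_double)
  moreover have "2 * fib i \<le> fib (i + 2)" by (rule fib_double)
  ultimately have "(2 * fib (k - 2)) * (2 * fib i) \<le> fib k * fib (i + 2)" by (rule mult_le_mono)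
  then show ?thesis by simp
qed

lemma fib_ge2: "n \<ge> 3 \<Longrightarrow> fib n \<ge> 2"
  using fib_mono[of 3 n] by (simp add: numeral_3_eq_3)


theorem theorem10:
  fixes i k :: nat
  assumes "i \<ge> 3" and "k \<ge> 3"
  shows
   "(k \<ge> i + 2 \<longrightarrow>
      real (sylvester_p 1 [fib i, fib (i+2), fib (i+k)]) =
        (3 * real (fib i) * real (fib (i+2)) - real (fib i) - real (fib (i+2)) + 1) / 2)
  \<and> (k \<in> {i, i+1} \<longrightarrow>
      real (sylvester_p 1 [fib i, fib (i+2), fib (i+k)]) =
        (3 * real (fib i) * real (fib (i+2)) - real (fib i) - real (fib (i+2)) + 1) / 2
        - (2 * real (fib i) - real (fib k)) * real (fib (k-2)))
  \<and> (let r = (fib i - 1) div fib k in r \<ge> 1 \<longrightarrow>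
      real (sylvester_p 1 [fib i, fib (i+2), fib (i+k)]) =
        ((real (fib i) + 2 * real (fib k) - 1) * real (fib (i+2)) - real (fib i) + 1) / 2
        - (real r * real (fib i) - (real r - 1) * (real r + 2) / 2 * real (fib k))
          * real (fib (k-2)))"
proof -
  define a where "a = fib i"
  define b where "b = fib (i+2)"
  define c where "c = fib (i+k)"
  define p where "p = fib (k-2)"
  define q where "q = fib k"
  have a2: "a \<ge> 2" unfolding a_def using assms by (intro fib_ge2)
  have b2: "b \<ge> 2" unfolding b_def using assms by (intro fib_ge2) simp
  have q2: "q \<ge> 2" unfolding q_def using assms by (intro fib_ge2)
  have apos: "a > 0" and bpos: "b > 0" and qpos: "q > 0" using a2 b2 q2 by simp_all
  have cop: "coprime a b" unfolding a_def b_def by (rule fib_coprime)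
  have ceq: "int c = int q * int b - int p * int a" unfolding a_def b_def c_def p_def q_def
    using assms by (intro fib_ident_int) simp
  have key: "3 * p * a \<le> q * b" unfolding a_def b_def p_def q_def using assms by (intro fib_key) simp
  have cnt0: "int (card {n. num_reps [a,b,c] n \<le> 1}) = (\<Sum>u<a. m1 a b p q u + int (b * u div a))"
    by (rule count_int[OF cop apos bpos qpos ceq key])
  define N where "N = real (sylvester_p 1 [a,b,c])"
  define M where "M = (\<Sum>u<a. m1 a b p q u)"
  define F where "F = (\<Sum>u<a. b * u div a)"
  have NMF: "N = real_of_int M + real F"
  proof -
    have "int (sylvester_p 1 [a,b,c]) = M + int F" using cnt0 unfolding sylvester_p_def M_def F_def
      by (simp add: sum.distrib)
    then have "real_of_int (int (sylvester_p 1 [a,b,c])) = real_of_int (M + int F)" by simp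
    then show ?thesis unfolding N_def by simp
  qed
  have "2 * F = (a - 1) * (b - 1)" unfolding F_def by (rule sum_floor[OF cop apos])
  then have "real (2 * F) = real ((a - 1) * (b - 1))" by simp
  then have F2: "2 * real F = (real a - 1) * (real b - 1)" using apos bpos by (simp add: of_nat_diff)
  have partA: "k \<ge> i + 2 \<Longrightarrow> N = (3 * real a * real b - real a - real b + 1) / 2"
  proof -
    assume k: "k \<ge> i + 2"
    have "b \<le> q" unfolding b_def q_def using k by (rule fib_mono)
    moreover have "2 * a \<le> b" unfolding a_def b_def by (rule fib_double)
    ultimately have aq: "a \<le> q" and "2 * a - q = 0" by simp_all
    then have "M = int a * int b" unfolding M_def using sumA[OF aq apos] by simp
    then show ?thesis using NMF F2 by (simp add: field_simps)
  qed
  have partB: "k \<in> {i, i+1} \<Longrightarrow> N = (3 * real a * real b - real a - real b + 1) / 2 - (2 * real a - real q) * real p"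
  proof -
    assume k: "k \<in> {i, i+1}"
    have aq: "a \<le> q" and q2a: "q \<le> 2 * a"
    proof -
      show "a \<le> q" using k unfolding a_def q_def by (auto intro: fib_mono)
      show "q \<le> 2 * a"
      proof (cases "k = i")
        case True then show ?thesis unfolding a_def q_def by simp
      next
        case False
        then have "k = i + 1" using k by simp
        define j where "j = i - 1"
        have j: "i = j + 1" using assms by (simp add: j_def)
        have "fib (j + 2) = fib (j + 1) + fib j" by (simp add: numeral_2_eq_2)
        moreover have "fib j \<le> fib (j + 1)" by (rule fib_mono) simp
        ultimately have "fib (j + 2) \<le> 2 * fib (j + 1)" by simp
        then show ?thesis unfolding a_def q_def \<open>k = i + 1\<close> j by (simp add: add.assoc)
      qed
    qed
    have "M = int a * int b - int p * int (2 * a - q)" unfolding M_def using sumA[OF aq apos] by simp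
    moreover have "real (2 * a - q) = 2 * real a - real q" using q2a by (simp add: of_nat_diff)
    ultimately have "real_of_int M = real a * real b - real p * (2 * real a - real q)"
      by (metis of_int_diff of_int_mult of_int_of_nat_eq)
    then show ?thesis using NMF F2 by (simp add: field_simps)
  qed
  have partC: "(let r = (a - 1) div q in r \<ge> 1 \<longrightarrow>
      N = ((real a + 2 * real q - 1) * real b - real a + 1) / 2
        - (real r * real a - (real r - 1) * (real r + 2) / 2 * real q) * real p)"
    unfolding Let_def
  proof
    define r where "r = (a - 1) div q"
    define t where "t = (a - 1) mod q"
    assume r1: "1 \<le> (a - 1) div q"
    then have r1': "r \<ge> 1" unfolding r_def .
    have at: "a - 1 = r * q + t" by (simp add: r_def t_def)
    have tq: "t + 1 \<le> q" using qpos by (simp add: t_def Suc_leI)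
    have qr: "q \<le> r * q" using r1' by simp
    have "r * q + t + 1 = a" using at apos by simp
    then have qa: "q < a" using qr by linarith
    have amq: "a - q = (r - 1) * q + (t + 1)"
    proof -
      have "a = r * q + t + 1" using at apos by simp
      moreover have "r * q = (r - 1) * q + q" using r1' by (cases r) simp_all
      ultimately show ?thesis by simp
    qed
    define T where "T = (\<Sum>u<a-q. u div q)"
    have T2: "2 * T = q * (r - 1) * (r - 1 - 1) + 2 * (r - 1) * (t + 1)"
      unfolding T_def amq by (rule T_formula[OF qpos tq])
    have MT: "M = int q * int b - int p * int a - int p * int T" unfolding M_def T_def by (rule sumC[OF qpos qa])
    have T2r: "2 * real T = real q * (real r - 1) * (real r - 2) + 2 * (real r - 1) * (real t + 1)"
    proof (cases "r = 1")
      case True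
      then show ?thesis using T2 by simp
    next
      case False
      define w where "w = r - 2"
      have w: "r = w + 2" using False r1' by (simp add: w_def)
      have "2 * T = q * (w + 1) * w + 2 * (w + 1) * (t + 1)" using T2 unfolding w by simp
      then have "real (2 * T) = real (q * (w + 1) * w + 2 * (w + 1) * (t + 1))" by (simp only:)
      then have "2 * real T = real q * (real w + 1) * real w + 2 * (real w + 1) * (real t + 1)" by (simp add: algebra_simps)
      then show ?thesis unfolding w by (simp add: algebra_simps)
    qed
    have tr: "real t + 1 = real a - real r * real q"
    proof -
      have "real (a - 1) = real (r * q + t)" using at by simp
      then show ?thesis using apos by (simp add: of_nat_diff)
    qed
    have Mr: "real_of_int M = real q * real b - real p * real a - real p * real T"
      using MT by simp
    define R where "R = real r"
    have S1: "2 * N = 2 * (real q * real b) - 2 * (real p * real a) - 2 * (real p * real T) + (real a - 1) * (real b - 1)"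
      using NMF F2 Mr by linarith
    have S2: "2 * (real p * real T) = real p * (real q * (R - 1) * (R - 2) + 2 * (R - 1) * (real a - R * real q))"
    proof -
      have T2': "2 * real T = real q * (R - 1) * (R - 2) + 2 * (R - 1) * (real a - R * real q)"
        using T2r unfolding tr R_def .
      show ?thesis unfolding T2'[symmetric] by (simp add: algebra_simps)
    qed
    have S3: "2 * (((real a + 2 * real q - 1) * real b - real a + 1) / 2
        - (R * real a - (R - 1) * (R + 2) / 2 * real q) * real p)
        = 2 * (real q * real b) - 2 * (real p * real a) - real p * (real q * (R - 1) * (R - 2) + 2 * (R - 1) * (real a - R * real q)) + (real a - 1) * (real b - 1)"
      by (simp add: field_simps)
    have "N = ((real a + 2 * real q - 1) * real b - real a + 1) / 2
        - (R * real a - (R - 1) * (R + 2) / 2 * real q) * real p"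
    proof -
      have "2 * N = 2 * (((real a + 2 * real q - 1) * real b - real a + 1) / 2
        - (R * real a - (R - 1) * (R + 2) / 2 * real q) * real p)"
        unfolding S1 S2 S3 ..
      moreover have cancel: "\<And>x y::real. 2 * x = 2 * y \<Longrightarrow> x = y" by simp
      ultimately show ?thesis by blast
    qed
    then show "N = ((real a + 2 * real q - 1) * real b - real a + 1) / 2
        - (real ((a - 1) div q) * real a - (real ((a - 1) div q) - 1) * (real ((a - 1) div q) + 2) / 2 * real q) * real p"
      unfolding R_def r_def .
  qed
  show ?thesis
    using partA partB partC unfolding N_def a_def b_def c_def p_def q_def by simp
qed

end
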